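(* For every integer $m\ge2$, $P(m+1)<P(m)$, where $$P(m)=\frac{m}{\sqrt\pi}\int_{-\infty}^{\infty}e^{-t^2}\bigl(1-\Phi(t)\bigr)^{m-1}\,dt.$$
   Context: $\Phi$ is the standard normal cumulative distribution function. $P(m)$ is the limit as the number of voters tends to infinity of the probability that a Condorcet winner exists among $m$ candidates under the impartial culture (each voter independently picks one of the $m!$ strict rankings uniformly at random). *)

theory Defs
  imports "HOL-Probability.Probability"
begin

definition Phi :: "real \<Rightarrow> real" where
  "Phi x = (LINT t:{..x}|lborel. std_normal_density t)"

definition P :: "nat \<Rightarrow> real" where
  "P m = real m / sqrt pi * (LINT t|lborel. exp (- t\<^sup>2) * (1 - Phi t) ^ (m - 1))"

end

theory Submission
  imports Defs "HOL-Real_Asymp.Real_Asymp"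
begin


lemma phi_integrable_on: "set_integrable lborel A std_normal_density" if "A \<in> sets lborel"
  unfolding set_integrable_def using that by (intro integrable_mult_indicator) auto

lemma Phi_split:
  assumes "a \<le> y"
  shows "Phi y = Phi a + (LBINT t=a..y. std_normal_density t)"
proof -
  have e: "{..y} = {..a} \<union> {a<..y}" using assms by auto
  have "Phi y = (LINT t:{..a} \<union> {a<..y}|lborel. std_normal_density t)" unfolding Phi_def e ..
  also have "\<dots> = (LINT t:{..a}|lborel. std_normal_density t) + (LINT t:{a<..y}|lborel. std_normal_density t)"
    by (rule set_integral_Un) (auto intro: phi_integrable_on)
  finally show ?thesis using assms by (simp add: Phi_def interval_integral_Ioc)
qed

lemma phi_cont: "continuous_on S std_normal_density"
  unfolding std_normal_density_def by (auto intro!: continuous_intros)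

lemma Phi_deriv: "(Phi has_real_derivative std_normal_density x) (at x)"
proof -
  have "((\<lambda>u. LBINT y=(x-1)..u. std_normal_density y) has_vector_derivative std_normal_density x) (at x within {x-1..x+1})"
    by (rule interval_integral_FTC2) (simp_all add: phi_cont)
  then have "((\<lambda>u. LBINT y=(x-1)..u. std_normal_density y) has_real_derivative std_normal_density x) (at x)"
    using at_within_Icc_at[of "x-1" x "x+1"] by (simp add: has_real_derivative_iff_has_vector_derivative)
  from DERIV_add[OF DERIV_const this, of "Phi (x-1)"]
  have "((\<lambda>u. Phi (x-1) + (LBINT y=(x-1)..u. std_normal_density y)) has_real_derivative std_normal_density x) (at x)"
    by simp
  then show ?thesis
    by (rule has_field_derivative_transform_within_open[where S="{x-1<..<x+1}"]) (auto intro: Phi_split[symmetric])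
qed

lemma Phi_nonneg: "0 \<le> Phi x"
  unfolding Phi_def set_lebesgue_integral_def by (intro Bochner_Integration.integral_nonneg) (auto split: split_indicator)

lemma Phi_le1: "Phi x \<le> 1"
proof -
  have "Phi x \<le> (LINT t|lborel. std_normal_density t)"
    unfolding Phi_def set_lebesgue_integral_def
    by (intro integral_mono integrable_mult_indicator) (auto split: split_indicator)
  then show ?thesis by simp
qed

lemma Phi_mono: assumes "x < y" shows "Phi x < Phi y"
proof (rule DERIV_pos_imp_increasing[where f=Phi, OF assms])
  fix t :: real
  show "\<exists>d. (Phi has_real_derivative d) (at t) \<and> 0 < d"
    by (intro exI[of _ "std_normal_density t"] conjI Phi_deriv normal_density_pos) simp
qed

lemma Phi_pos: "0 < Phi x"
  using Phi_mono[of "x-1" x] Phi_nonneg[of "x-1"] by simp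

lemma Phi_lt1: "Phi x < 1"
  using Phi_mono[of x "x+1"] Phi_le1[of "x+1"] by simp

lemma Phi_sym: "Phi (-x) = 1 - Phi x"
proof -
  have "Phi (-x) = (LINT t|lborel. indicator {..-x} t *\<^sub>R std_normal_density t)"
    by (simp add: Phi_def set_lebesgue_integral_def)
  also have "\<dots> = (LINT t|lborel. indicator {..-x} (-t) *\<^sub>R std_normal_density (-t))"
    using lborel_integral_real_affine[where c="-1" and t=0, of "\<lambda>t. indicator {..-x} t *\<^sub>R std_normal_density t"]
    by simp
  also have "\<dots> = (LINT t|lborel. indicator {x..} t *\<^sub>R std_normal_density t)"
    by (intro Bochner_Integration.integral_cong) (auto simp: std_normal_density_def split: split_indicator)
  also have "\<dots> = (LINT t:{x<..}|lborel. std_normal_density t)"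
    unfolding set_lebesgue_integral_def[symmetric]
    by (rule set_integral_discrete_difference[where X="{x}"]) auto
  finally have 1: "Phi (-x) = (LINT t:{x<..}|lborel. std_normal_density t)" .
  have "{..x} \<union> {x<..} = UNIV" by auto
  then have "1 = (LINT t:{..x} \<union> {x<..}|lborel. std_normal_density t)"
    by (simp add: set_lebesgue_integral_def)
  also have "\<dots> = (LINT t:{..x}|lborel. std_normal_density t) + (LINT t:{x<..}|lborel. std_normal_density t)"
    by (rule set_integral_Un) (auto intro: phi_integrable_on)
  also have "\<dots> = Phi x + Phi (-x)" unfolding 1 by (simp add: Phi_def)
  finally show ?thesis by simp
qed


lemma Phi_cont: "continuous_on S Phi"
  by (meson DERIV_isCont Phi_deriv continuous_at_imp_continuous_on)

lemma Phi_meas[measurable]: "Phi \<in> borel_measurable borel"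
  by (rule borel_measurable_continuous_onI[OF Phi_cont])

lemma int_abs_e: "integrable lborel (\<lambda>t::real. \<bar>t\<bar> * exp (- t\<^sup>2 / 2))"
proof -
  have "integrable lborel (\<lambda>t::real. sqrt (2*pi) * (std_normal_density t * \<bar>t\<bar> ^ 1))"
    by (intro integrable_mult_right integrable_std_normal_moment_abs)
  then show ?thesis by (simp add: std_normal_density_def mult.commute)
qed

lemma int_phi_e: "integrable lborel (\<lambda>t::real. std_normal_density t * exp (- t\<^sup>2 / 2))"
proof (rule Bochner_Integration.integrable_bound[OF integrable_normal_density[where \<mu>=0 and \<sigma>=1]])
  show "AE x in lborel. norm (std_normal_density x * exp (- x\<^sup>2 / 2)) \<le> norm (std_normal_density x)"
  proof (rule AE_I2)
    fix x :: real
    have "std_normal_density x * exp (- x\<^sup>2 / 2) \<le> std_normal_density x"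
      by (rule mult_left_le[OF _ normal_density_nonneg]) simp
    then show "norm (std_normal_density x * exp (- x\<^sup>2 / 2)) \<le> norm (std_normal_density x)"
      by (simp add: abs_mult)
  qed
qed measurable

lemma ibp_zero:
  fixes F f :: "real \<Rightarrow> real"
  assumes "\<And>x. (F has_real_derivative f x) (at x)" "\<And>x. isCont f x" "integrable lborel f"
    "(F \<longlongrightarrow> 0) at_top" "(F \<longlongrightarrow> 0) at_bot"
  shows "integral\<^sup>L lborel f = 0"
proof -
  have "(LBINT x=-\<infinity>..\<infinity>. f x) = 0 - 0"
    by (rule interval_integral_FTC_integrable[where F=F])
       (use assms in \<open>auto simp: has_real_derivative_iff_has_vector_derivative[symmetric] ereal_tendsto_simps1 set_integrable_def\<close>)
  then show ?thesis by (simp add: interval_lebesgue_integral_def set_lebesgue_integral_def)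
qed

lemma e_lim_top: "((\<lambda>t::real. exp (- t\<^sup>2 / 2)) \<longlongrightarrow> 0) at_top" by real_asymp
lemma e_lim_bot: "((\<lambda>t::real. exp (- t\<^sup>2 / 2)) \<longlongrightarrow> 0) at_bot" by real_asymp

lemma s_bounds: "0 \<le> 1 - Phi t" "1 - Phi t \<le> 1"
  using Phi_le1[of t] Phi_nonneg[of t] by auto

lemma F_lim:
  fixes n :: nat
  shows "((\<lambda>t. exp (- t\<^sup>2 / 2) * (1 - Phi t) ^ n) \<longlongrightarrow> 0) at_top"
    "((\<lambda>t. exp (- t\<^sup>2 / 2) * (1 - Phi t) ^ n) \<longlongrightarrow> 0) at_bot"
proof -
  have b: "norm (exp (- t\<^sup>2 / 2) * (1 - Phi t) ^ n) \<le> exp (- t\<^sup>2 / 2)" for t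
    using s_bounds[of t] by (auto simp: abs_mult intro!: mult_left_le power_le_one)
  show "((\<lambda>t. exp (- t\<^sup>2 / 2) * (1 - Phi t) ^ n) \<longlongrightarrow> 0) at_top"
    by (rule Lim_null_comparison[OF _ e_lim_top]) (use b in auto)
  show "((\<lambda>t. exp (- t\<^sup>2 / 2) * (1 - Phi t) ^ n) \<longlongrightarrow> 0) at_bot"
    by (rule Lim_null_comparison[OF _ e_lim_bot]) (use b in auto)
qed

lemma F_deriv:
  fixes n :: nat
  shows "((\<lambda>t. exp (- t\<^sup>2 / 2) * (1 - Phi t) ^ n) has_real_derivative
     (-(t * exp (- t\<^sup>2 / 2) * (1 - Phi t) ^ n) - real n * ((1 - Phi t) ^ (n - 1) * (std_normal_density t * exp (- t\<^sup>2 / 2))))) (at t)"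
  by (auto intro!: derivative_eq_intros Phi_deriv simp: algebra_simps power2_eq_square)

lemma int1: "integrable lborel (\<lambda>t::real. t * exp (- t\<^sup>2 / 2) * (1 - Phi t) ^ n)"
  by (rule Bochner_Integration.integrable_bound[OF int_abs_e])
     (use s_bounds in \<open>auto simp: abs_mult intro!: mult_left_le power_le_one\<close>)

lemma int2: "integrable lborel (\<lambda>t::real. (1 - Phi t) ^ k * (std_normal_density t * exp (- t\<^sup>2 / 2)))"
  by (rule Bochner_Integration.integrable_bound[OF int_phi_e])
     (use s_bounds in \<open>auto simp: abs_mult intro!: mult_left_le_one_le power_le_one\<close>)


lemma Phi_isCont: "isCont Phi x"
  using DERIV_isCont Phi_deriv by blast

lemma ibp_n: "real n * integral\<^sup>L lborel (\<lambda>t. (1 - Phi t) ^ (n - 1) * (std_normal_density t * exp (- t\<^sup>2 / 2)))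
  = - integral\<^sup>L lborel (\<lambda>t::real. t * exp (- t\<^sup>2 / 2) * (1 - Phi t) ^ n)"
proof -
  have "integral\<^sup>L lborel (\<lambda>t. -(t * exp (- t\<^sup>2 / 2) * (1 - Phi t) ^ n) - real n * ((1 - Phi t) ^ (n - 1) * (std_normal_density t * exp (- t\<^sup>2 / 2)))) = 0"
  proof (rule ibp_zero[OF F_deriv _ _ F_lim])
    show "isCont (\<lambda>t. -(t * exp (- t\<^sup>2 / 2) * (1 - Phi t) ^ n) - real n * ((1 - Phi t) ^ (n - 1) * (std_normal_density t * exp (- t\<^sup>2 / 2)))) x" for x
      unfolding std_normal_density_def by (intro continuous_intros Phi_isCont; simp)
    show "integrable lborel (\<lambda>t. -(t * exp (- t\<^sup>2 / 2) * (1 - Phi t) ^ n) - real n * ((1 - Phi t) ^ (n - 1) * (std_normal_density t * exp (- t\<^sup>2 / 2))))"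
      by (intro Bochner_Integration.integrable_diff integrable_minus integrable_mult_right int1 int2)
  qed
  then show ?thesis
    using Bochner_Integration.integral_diff[OF integrable_minus[OF int1[of n]] integrable_mult_right[OF int2[of "n-1"]], of "real n"]
    by (simp add: integral_mult_right_zero)
qed

definition G :: "nat \<Rightarrow> real" where
  "G n = integral\<^sup>L lborel (\<lambda>t::real. t * exp (- t\<^sup>2 / 2) * (1 - Phi t) ^ n)"

lemma P_eq: "P n = - sqrt 2 * G n"
proof -
  have pw: "(1 - Phi t) ^ (n - 1) * (std_normal_density t * exp (- t\<^sup>2 / 2))
      = (1 / sqrt (2*pi)) * (exp (- t\<^sup>2) * (1 - Phi t) ^ (n - 1))" for t
  proof -
    have "exp (- t\<^sup>2 / 2) * exp (- t\<^sup>2 / 2) = exp (- t\<^sup>2)"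
      by (simp add: exp_add[symmetric])
    then show ?thesis by (simp add: std_normal_density_def algebra_simps)
  qed
  have "P n = real n / sqrt pi * (sqrt (2*pi) * integral\<^sup>L lborel (\<lambda>t. (1 - Phi t) ^ (n - 1) * (std_normal_density t * exp (- t\<^sup>2 / 2))))"
    unfolding P_def pw by simp
  also have "\<dots> = sqrt 2 * (real n * integral\<^sup>L lborel (\<lambda>t. (1 - Phi t) ^ (n - 1) * (std_normal_density t * exp (- t\<^sup>2 / 2))))"
    by (simp add: real_sqrt_mult)
  also have "\<dots> = - sqrt 2 * G n" unfolding ibp_n G_def by simp
  finally show ?thesis .
qed


lemma pow_ineq:
  fixes a b :: real
  assumes "0 < a" "a < b" "2 \<le> m"
  shows "a ^ m * b < b ^ m * a"
proof -
  obtain j where m: "m = Suc (Suc j)" using assms(3) by (metis add_2_eq_Suc le_Suc_ex)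
  have "a ^ Suc j < b ^ Suc j" using assms by (intro power_strict_mono) auto
  then have "(a * b) * a ^ Suc j < (a * b) * b ^ Suc j"
    using assms by (intro mult_strict_left_mono) auto
  then show ?thesis unfolding m by (simp add: algebra_simps)
qed

lemma hb:
  fixes a b c :: real
  assumes "0 \<le> a" "a \<le> 1" "0 \<le> b" "b \<le> 1" "0 \<le> c"
  shows "c * a ^ m * b \<le> c"
proof -
  have "a ^ m * b \<le> 1" using assms by (intro mult_le_one power_le_one) auto
  then have "c * (a ^ m * b) \<le> c" using assms by (intro mult_left_le) auto
  then show ?thesis by (simp add: mult.assoc)
qed

lemma Phi0: "Phi 0 = 1/2" using Phi_sym[of 0] by simp

lemma k_pos:
  assumes "2 \<le> m" "0 < t"
  shows "0 < t * exp (- t\<^sup>2 / 2) * (Phi t ^ m * (1 - Phi t) - (1 - Phi t) ^ m * Phi t)"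
proof -
  have "1/2 < Phi t" using Phi_mono[OF assms(2)] Phi0 by simp
  then have "(1 - Phi t) ^ m * Phi t < Phi t ^ m * (1 - Phi t)"
    using Phi_lt1[of t] assms(1) by (intro pow_ineq) auto
  then show ?thesis using assms(2) by (intro mult_pos_pos) auto
qed

lemma k_nonneg:
  assumes "2 \<le> m"
  shows "0 \<le> t * exp (- t\<^sup>2 / 2) * (Phi t ^ m * (1 - Phi t) - (1 - Phi t) ^ m * Phi t)"
proof (cases "0 < t")
  case True then show ?thesis using k_pos[OF assms] less_imp_le by blast
next
  case False
  show ?thesis
  proof (cases "t = 0")
    case False
    with \<open>\<not> 0 < t\<close> have "t < 0" by simp
    then have "Phi t < 1/2" using Phi_mono[of t 0] Phi0 by simp
    then have "Phi t ^ m * (1 - Phi t) < (1 - Phi t) ^ m * Phi t"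
      using Phi_pos[of t] assms by (intro pow_ineq) auto
    then have "0 < (-t) * exp (- t\<^sup>2 / 2) * ((1 - Phi t) ^ m * Phi t - Phi t ^ m * (1 - Phi t))"
      using \<open>t < 0\<close> by (intro mult_pos_pos) auto
    then show ?thesis by (simp add: algebra_simps)
  qed simp
qed

lemma int_k: "integrable lborel (\<lambda>t::real. t * exp (- t\<^sup>2 / 2) * (Phi t ^ m * (1 - Phi t) - (1 - Phi t) ^ m * Phi t))"
proof (rule Bochner_Integration.integrable_bound[OF integrable_mult_right[OF int_abs_e, of 2]])
  show "AE x in lborel. norm (x * exp (- x\<^sup>2 / 2) * (Phi x ^ m * (1 - Phi x) - (1 - Phi x) ^ m * Phi x)) \<le> norm (2 * (\<bar>x\<bar> * exp (- x\<^sup>2 / 2)))"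
  proof (rule AE_I2)
    fix x :: real
    have a: "\<bar>Phi x ^ m * (1 - Phi x)\<bar> \<le> 1" "\<bar>(1 - Phi x) ^ m * Phi x\<bar> \<le> 1"
      using Phi_le1[of x] Phi_nonneg[of x]
      by (auto simp: abs_mult intro!: mult_le_one power_le_one)
    have "\<bar>Phi x ^ m * (1 - Phi x) - (1 - Phi x) ^ m * Phi x\<bar> \<le> 2" using a by linarith
    then have "\<bar>x * exp (- x\<^sup>2 / 2)\<bar> * \<bar>Phi x ^ m * (1 - Phi x) - (1 - Phi x) ^ m * Phi x\<bar> \<le> \<bar>x * exp (- x\<^sup>2 / 2)\<bar> * 2"
      by (intro mult_left_mono) auto
    then show "norm (x * exp (- x\<^sup>2 / 2) * (Phi x ^ m * (1 - Phi x) - (1 - Phi x) ^ m * Phi x)) \<le> norm (2 * (\<bar>x\<bar> * exp (- x\<^sup>2 / 2)))"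
      by (simp add: abs_mult)
  qed
qed measurable

lemma int_k_pos:
  assumes "2 \<le> m"
  shows "0 < integral\<^sup>L lborel (\<lambda>t::real. t * exp (- t\<^sup>2 / 2) * (Phi t ^ m * (1 - Phi t) - (1 - Phi t) ^ m * Phi t))"
    (is "0 < integral\<^sup>L lborel ?k")
proof -
  have nn: "AE t in lborel. 0 \<le> ?k t" using k_nonneg[OF assms] by simp
  have "0 \<le> integral\<^sup>L lborel ?k" using k_nonneg[OF assms] by (intro Bochner_Integration.integral_nonneg) simp
  moreover have "integral\<^sup>L lborel ?k \<noteq> 0"
  proof
    assume "integral\<^sup>L lborel ?k = 0"
    then have ae0: "AE t in lborel. ?k t = 0" using integral_nonneg_eq_0_iff_AE[OF int_k nn] by simp
    have "AE t in lborel. (t::real) \<le> 0"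
      using ae0
    proof (rule eventually_mono)
      fix t :: real assume "?k t = 0"
      then show "t \<le> 0" using k_pos[OF assms, of t] by (metis less_irrefl not_le)
    qed
    then have "emeasure lborel {0::real<..} = 0"
      by (subst (asm) AE_iff_measurable[where N="{0<..}"]) auto
    moreover have "emeasure lborel {0::real<..<1} \<le> emeasure lborel {0::real<..}"
      by (intro emeasure_mono) auto
    ultimately show False by simp
  qed
  ultimately show ?thesis by simp
qed

theorem mainTheorem6:
  fixes m :: nat
  assumes "m \<ge> 2"
  shows "P (m + 1) < P m"
proof -
  define h where "h t = t * exp (- t\<^sup>2 / 2) * (1 - Phi t) ^ m * Phi t" for t :: real
  define hr where "hr t = - t * exp (- t\<^sup>2 / 2) * Phi t ^ m * (1 - Phi t)" for t :: real
  have ih: "integrable lborel h"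
    unfolding h_def
  proof (rule Bochner_Integration.integrable_bound[OF int_abs_e])
    show "AE x in lborel. norm (x * exp (- x\<^sup>2 / 2) * (1 - Phi x) ^ m * Phi x) \<le> norm (\<bar>x\<bar> * exp (- x\<^sup>2 / 2))"
    proof (rule AE_I2)
      fix x :: real
      show "norm (x * exp (- x\<^sup>2 / 2) * (1 - Phi x) ^ m * Phi x) \<le> norm (\<bar>x\<bar> * exp (- x\<^sup>2 / 2))"
        using hb[of "1 - Phi x" "Phi x" "\<bar>x\<bar> * exp (- x\<^sup>2 / 2)"] hb[of "Phi x" "1 - Phi x" "\<bar>x\<bar> * exp (- x\<^sup>2 / 2)"]
          Phi_le1[of x] Phi_nonneg[of x]
        by (simp add: abs_mult)
    qed
  qed measurable
  have ihr: "integrable lborel hr"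
    unfolding hr_def
  proof (rule Bochner_Integration.integrable_bound[OF int_abs_e])
    show "AE x in lborel. norm (- x * exp (- x\<^sup>2 / 2) * Phi x ^ m * (1 - Phi x)) \<le> norm (\<bar>x\<bar> * exp (- x\<^sup>2 / 2))"
    proof (rule AE_I2)
      fix x :: real
      show "norm (- x * exp (- x\<^sup>2 / 2) * Phi x ^ m * (1 - Phi x)) \<le> norm (\<bar>x\<bar> * exp (- x\<^sup>2 / 2))"
        using hb[of "1 - Phi x" "Phi x" "\<bar>x\<bar> * exp (- x\<^sup>2 / 2)"] hb[of "Phi x" "1 - Phi x" "\<bar>x\<bar> * exp (- x\<^sup>2 / 2)"]
          Phi_le1[of x] Phi_nonneg[of x]
        by (simp add: abs_mult)
    qed
  qed measurable
  have "G (m+1) - G m = integral\<^sup>L lborel (\<lambda>t. t * exp (- t\<^sup>2 / 2) * (1 - Phi t) ^ (m+1) - t * exp (- t\<^sup>2 / 2) * (1 - Phi t) ^ m)"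
    unfolding G_def by (rule Bochner_Integration.integral_diff[symmetric]) (rule int1)+
  also have "\<dots> = - integral\<^sup>L lborel h"
    unfolding integral_minus[symmetric] h_def
    by (intro Bochner_Integration.integral_cong) (auto simp: algebra_simps)
  finally have d: "G (m+1) - G m = - integral\<^sup>L lborel h" .
  have "integral\<^sup>L lborel h = integral\<^sup>L lborel (\<lambda>x. h (0 + -1 * x))"
    using lborel_integral_real_affine[where c="-1" and t=0, of h] by simp
  also have "\<dots> = integral\<^sup>L lborel hr"
    by (intro Bochner_Integration.integral_cong) (auto simp: h_def hr_def Phi_sym)
  finally have r: "integral\<^sup>L lborel h = integral\<^sup>L lborel hr" .
  have "integral\<^sup>L lborel h + integral\<^sup>L lborel hr = integral\<^sup>L lborel (\<lambda>t. h t + hr t)"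
    by (rule Bochner_Integration.integral_add[symmetric, OF ih ihr])
  also have "\<dots> = - integral\<^sup>L lborel (\<lambda>t::real. t * exp (- t\<^sup>2 / 2) * (Phi t ^ m * (1 - Phi t) - (1 - Phi t) ^ m * Phi t))"
    unfolding integral_minus[symmetric] h_def hr_def
    by (intro Bochner_Integration.integral_cong) (auto simp: algebra_simps)
  finally have "integral\<^sup>L lborel h < 0" using r int_k_pos[OF assms] by simp
  then have "G m < G (m+1)" using d by simp
  then show ?thesis unfolding P_eq by simp
qed

end
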